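(* $R_3(L) \le 2593$. That is, for every coloring of the lattice grid $[2593]\times[2593]$ with 3 colors there exist integers $i,j$ and $t\ge 1$ such that the three points $(i,j)$, $(i,j+t)$, $(i+t,j+t)$ all lie in the grid and all receive the same color.
   Context: For $n\in\mathbb{N}$, $[n]=\{1,\dots,n\}$. An $L$ in the grid $[n]\times[n]$ is a set of three lattice points of the form $\{(i,j),(i,j+t),(i+t,j+t)\}$ with $t$ a positive integer (an isosceles right triangle). A $c$-coloring of the grid is a function $[n]\times[n]\to[c]$. $R_c(L)$ denotes the least $n$ such that every $c$-coloring of $[n]\times[n]$ contains a monochromatic $L$. *)

theory Defs
  imports Main
begin

definition grid :: "nat \<Rightarrow> (nat \<times> nat) set" where
  "grid n = {1..n} \<times> {1..n}"

definition coloring :: "nat \<Rightarrow> nat \<Rightarrow> (nat \<times> nat \<Rightarrow> nat) \<Rightarrow> bool" where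
  "coloring c n f \<longleftrightarrow> (\<forall>p \<in> grid n. f p \<in> {1..c})"

definition has_mono_L :: "nat \<Rightarrow> (nat \<times> nat \<Rightarrow> nat) \<Rightarrow> bool" where
  "has_mono_L n f \<longleftrightarrow> (\<exists>i j t. t \<ge> 1 \<and>
      (i, j) \<in> grid n \<and> (i, j + t) \<in> grid n \<and> (i + t, j + t) \<in> grid n \<and>
      f (i, j) = f (i, j + t) \<and> f (i, j + t) = f (i + t, j + t))"

end

theory Submission
  imports Defs
begin

lemma noL:
  assumes nL: "\<not> has_mono_L n f" and "1 \<le> i" "1 \<le> j" "j < k" "k \<le> n" "l = i + (k - j)" "l \<le> n"
  shows "f (i,j) \<noteq> f (i,k) \<or> f (i,k) \<noteq> f (l,k)"
proof (rule ccontr)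
  assume "\<not> (f (i,j) \<noteq> f (i,k) \<or> f (i,k) \<noteq> f (l,k))"
  hence e: "f (i,j) = f (i,k)" "f (i,k) = f (l,k)" by auto
  have "has_mono_L n f"
    unfolding has_mono_L_def grid_def
    apply (rule exI[of _ i], rule exI[of _ j], rule exI[of _ "k - j"])
    using assms e by auto
  with nL show False by simp
qed

definition Aset :: "nat \<Rightarrow> (nat \<times> nat \<Rightarrow> nat) \<Rightarrow> nat \<Rightarrow> nat \<Rightarrow> nat \<Rightarrow> nat set" where
  "Aset n f t c1 c0 = {x. 1 \<le> x \<and> x + t \<le> n \<and> f (x,x) = c1 \<and> f (x+t,x+t) = c1 \<and> f (x,x+t) = c0}"

lemma colr:
  assumes "coloring 3 n f" "1 \<le> x" "x \<le> n" "1 \<le> y" "y \<le> n"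
  shows "f (x,y) \<in> {1..3}"
  using assms unfolding coloring_def grid_def by auto


lemma col3:
  fixes c0 c1 g1 g2 h :: nat
  shows "c0 \<in> {1..3} \<Longrightarrow> c1 \<in> {1..3} \<Longrightarrow> g1 \<in> {1..3} \<Longrightarrow> g2 \<in> {1..3} \<Longrightarrow> h \<in> {1..3} \<Longrightarrow>
   c0 \<noteq> c1 \<Longrightarrow> g1 \<noteq> c0 \<Longrightarrow> g1 \<noteq> c1 \<Longrightarrow> g2 \<noteq> c0 \<Longrightarrow> g2 \<noteq> c1 \<Longrightarrow> h \<noteq> c0 \<Longrightarrow> h \<noteq> c1 \<Longrightarrow>
   \<not> (g1 = h \<and> h = g2) \<Longrightarrow> False"
  by auto

lemma key:
  assumes nL: "\<not> has_mono_L n f" and col: "coloring 3 n f" and t: "1 \<le> t"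
    and ab: "a < b" and T: "1 \<le> T"
    and A: "a \<in> Aset n f t c1 c0" "a+T \<in> Aset n f t c1 c0" "b \<in> Aset n f t c1 c0" "b+T \<in> Aset n f t c1 c0"
  shows False
proof -
  from A have a1: "1 \<le> a" and bT: "b + T + t \<le> n"
    and fa: "f (a,a) = c1" "f (a+t,a+t) = c1" "f (a,a+t) = c0"
    and faT: "f (a+T,a+T) = c1" "f (a+T+t,a+T+t) = c1" "f (a+T,a+T+t) = c0"
    and fb: "f (b,b) = c1" "f (b+t,b+t) = c1" "f (b,b+t) = c0"
    and fbT: "f (b+T,b+T) = c1" "f (b+T+t,b+T+t) = c1" "f (b+T,b+T+t) = c0"
    unfolding Aset_def by auto
  have h1: "f (a,a) \<noteq> f (a,a+t) \<or> f (a,a+t) \<noteq> f (a+t,a+t)"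
    by (rule noL[OF nL]) (use a1 ab bT t T in auto)
  hence c01: "c0 \<noteq> c1" using fa by auto
  have g1a: "f (a,a+t) \<noteq> f (a,a+T+t) \<or> f (a,a+T+t) \<noteq> f (a+T,a+T+t)"
    by (rule noL[OF nL]) (use a1 ab bT t T in auto)
  have g1b: "f (a,a) \<noteq> f (a,a+T+t) \<or> f (a,a+T+t) \<noteq> f (a+T+t,a+T+t)"
    by (rule noL[OF nL]) (use a1 ab bT t T in auto)
  have g2a: "f (b,b+t) \<noteq> f (b,b+T+t) \<or> f (b,b+T+t) \<noteq> f (b+T,b+T+t)"
    by (rule noL[OF nL]) (use a1 ab bT t T in auto)
  have g2b: "f (b,b) \<noteq> f (b,b+T+t) \<or> f (b,b+T+t) \<noteq> f (b+T+t,b+T+t)"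
    by (rule noL[OF nL]) (use a1 ab bT t T in auto)
  have ha: "f (a,a+T+t) \<noteq> f (a,b+T+t) \<or> f (a,b+T+t) \<noteq> f (b,b+T+t)"
    by (rule noL[OF nL]) (use a1 ab bT t T in auto)
  have hb: "f (a,a+t) \<noteq> f (a,b+T+t) \<or> f (a,b+T+t) \<noteq> f (b+T,b+T+t)"
    by (rule noL[OF nL]) (use a1 ab bT t T in auto)
  have hc: "f (a,a) \<noteq> f (a,b+T+t) \<or> f (a,b+T+t) \<noteq> f (b+T+t,b+T+t)"
    by (rule noL[OF nL]) (use a1 ab bT t T in auto)
  have r1: "f (a,a) \<in> {1..3}" "f (a,a+t) \<in> {1..3}" "f (a,a+T+t) \<in> {1..3}"
     "f (b,b+T+t) \<in> {1..3}" "f (a,b+T+t) \<in> {1..3}"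
    by (rule colr[OF col]; use a1 ab bT t T in auto)+
  have x1: "f (a,a+T+t) \<noteq> c0" using g1a fa(3) faT(3) by metis
  have x2: "f (a,a+T+t) \<noteq> c1" using g1b fa(1) faT(2) by metis
  have x3: "f (b,b+T+t) \<noteq> c0" using g2a fb(3) fbT(3) by metis
  have x4: "f (b,b+T+t) \<noteq> c1" using g2b fb(1) fbT(2) by metis
  have x5: "f (a,b+T+t) \<noteq> c0" using hb fa(3) fbT(3) by metis
  have x6: "f (a,b+T+t) \<noteq> c1" using hc fa(1) fbT(2) by metis
  have x7: "\<not> (f (a,a+T+t) = f (a,b+T+t) \<and> f (a,b+T+t) = f (b,b+T+t))" using ha by blast
  show False
    by (rule col3[OF _ _ r1(3) r1(4) r1(5) c01 x1 x2 x3 x4 x5 x6 x7])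
       (use r1(1,2) fa(1,3) in simp_all)
qed



lemma lt_pairs_card:
  fixes S :: "nat set"
  assumes "finite S"
  shows "2 * card {(x,y). x \<in> S \<and> y \<in> S \<and> x < y} + card S = card S * card S"
proof -
  define Lt where "Lt = {(x,y). x \<in> S \<and> y \<in> S \<and> x < y}"
  define Gt where "Gt = {(x,y). x \<in> S \<and> y \<in> S \<and> y < x}"
  define D where "D = (\<lambda>x. (x,x)) ` S"
  have SS: "S \<times> S = D \<union> (Lt \<union> Gt)" unfolding D_def Lt_def Gt_def by auto
  have fin: "finite Lt" "finite Gt" "finite D" using assms unfolding Lt_def Gt_def D_def
    by (auto intro: finite_subset[of _ "S \<times> S"])
  have "Gt = (\<lambda>(x,y). (y,x)) ` Lt" unfolding Gt_def Lt_def by auto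
  moreover have "inj_on (\<lambda>(x,y). (y,x)) Lt" by (auto simp: inj_on_def)
  ultimately have cG: "card Gt = card Lt" by (simp add: card_image)
  have cD: "card D = card S" unfolding D_def by (simp add: card_image inj_on_def)
  have "card (S \<times> S) = card D + (card Lt + card Gt)"
    unfolding SS using fin
    by (subst card_Un_disjoint, auto simp: D_def Lt_def Gt_def intro!: card_Un_disjoint)
  then show ?thesis using cG cD unfolding Lt_def[symmetric] by (simp add: card_cartesian_product)
qed

lemma sidon_bound:
  fixes A :: "nat set"
  assumes "A \<subseteq> {1..2593}"
    and inj: "inj_on (\<lambda>(x,y). y - x) {(x,y). x \<in> A \<and> y \<in> A \<and> x < y}"
  shows "card A \<le> 72"
proof -
  have fA: "finite A" using assms(1) finite_subset by blast
  let ?L = "{(x,y). x \<in> A \<and> y \<in> A \<and> x < y}"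
  have bA: "\<forall>x\<in>A. 1 \<le> x \<and> x \<le> 2593" using assms(1) by auto
  have "(\<lambda>(x,y). y - x) ` ?L \<subseteq> {1..2592}"
  proof
    fix z assume "z \<in> (\<lambda>(x,y). y - x) ` ?L"
    then obtain x y where "x \<in> A" "y \<in> A" "x < y" "z = y - x" by auto
    moreover have "1 \<le> x" "y \<le> 2593" using bA \<open>x \<in> A\<close> \<open>y \<in> A\<close> by auto
    ultimately show "z \<in> {1..2592}" by (simp del: One_nat_def; arith)
  qed
  hence "card ((\<lambda>(x,y). y - x) ` ?L) \<le> card {1..2592::nat}"
    by (intro card_mono) auto
  hence "card ((\<lambda>(x,y). y - x) ` ?L) \<le> 2592" by simp
  hence cL: "card ?L \<le> 2592" using card_image[OF inj] by simp
  have e: "2 * card ?L + card A = card A * card A" by (rule lt_pairs_card[OF fA])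
  show ?thesis
  proof (rule ccontr)
    assume "\<not> card A \<le> 72"
    hence k: "73 \<le> card A" by simp
    hence "73 * card A \<le> card A * card A" by (rule mult_right_mono) simp
    thus False using e cL k by linarith
  qed
qed

lemma sq3i: "((a::int)+b+c)^2 \<le> 3*(a^2+b^2+c^2)"
proof -
  have "3*(a^2+b^2+c^2) - (a+b+c)^2 = (a-b)^2+(b-c)^2+(a-c)^2"
    by (simp add: power2_eq_square algebra_simps)
  moreover have "0 \<le> (a-b)^2+(b-c)^2+(a-c)^2" by simp
  ultimately show ?thesis by linarith
qed
lemma sq3: "((s1::nat)+s2+s3)^2 \<le> 3*(s1^2+s2^2+s3^2)"
proof -
  have "int ((s1+s2+s3)^2) \<le> int (3*(s1^2+s2^2+s3^2))"
    using sq3i[of "int s1" "int s2" "int s3"] by simp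
  then show ?thesis by linarith
qed


lemma Aset_card:
  assumes nL: "\<not> has_mono_L 2593 f" and col: "coloring 3 2593 f" and t: "1 \<le> t"
  shows "card (Aset 2593 f t c1 c0) \<le> 72"
proof (rule sidon_bound)
  show "Aset 2593 f t c1 c0 \<subseteq> {1..2593}" unfolding Aset_def by auto
  show "inj_on (\<lambda>(x,y). y - x) {(x,y). x \<in> Aset 2593 f t c1 c0 \<and> y \<in> Aset 2593 f t c1 c0 \<and> x < y}"
  proof (rule inj_onI, clarsimp)
    fix x y u v
    assume xy: "x \<in> Aset 2593 f t c1 c0" "y \<in> Aset 2593 f t c1 c0" "x < y"
      and uv: "u \<in> Aset 2593 f t c1 c0" "v \<in> Aset 2593 f t c1 c0" "u < v" and e: "y - x = v - u"
    show "x = u \<and> y = v"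
    proof (cases "x = u")
      case True then show ?thesis using e xy uv by auto
    next
      case False
      show ?thesis
      proof (cases "x < u")
        case True
        have m: "x + (y - x) \<in> Aset 2593 f t c1 c0" "u + (y - x) \<in> Aset 2593 f t c1 c0"
        proof -
          have "x + (y - x) = y" "u + (y - x) = v" using xy(3) uv(3) e by auto
          then show "x + (y - x) \<in> Aset 2593 f t c1 c0" "u + (y - x) \<in> Aset 2593 f t c1 c0"
            using xy(2) uv(2) by simp_all
        qed
        have False by (rule key[OF nL col t True _ xy(1) m(1) uv(1) m(2)]) (use xy in simp)
        then show ?thesis ..
      next
        case False
        hence lt: "u < x" using \<open>x \<noteq> u\<close> by auto
        have m: "x + (y - x) \<in> Aset 2593 f t c1 c0" "u + (y - x) \<in> Aset 2593 f t c1 c0"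
        proof -
          have "x + (y - x) = y" "u + (y - x) = v" using xy(3) uv(3) e by auto
          then show "x + (y - x) \<in> Aset 2593 f t c1 c0" "u + (y - x) \<in> Aset 2593 f t c1 c0"
            using xy(2) uv(2) by simp_all
        qed
        have False by (rule key[OF nL col t lt _ uv(1) m(2) xy(1) m(1)]) (use xy in simp)
        then show ?thesis ..
      qed
    qed
  qed
qed

lemma card_Un6: "card (A\<union>B\<union>C\<union>D\<union>E\<union>F) \<le> card A + card B + card C + card D + card E + card F"
proof -
  have "card (A\<union>B\<union>C\<union>D\<union>E\<union>F) \<le> card (A\<union>B\<union>C\<union>D\<union>E) + card F" by (rule card_Un_le)
  moreover have "card (A\<union>B\<union>C\<union>D\<union>E) \<le> card (A\<union>B\<union>C\<union>D) + card E" by (rule card_Un_le)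
  moreover have "card (A\<union>B\<union>C\<union>D) \<le> card (A\<union>B\<union>C) + card D" by (rule card_Un_le)
  moreover have "card (A\<union>B\<union>C) \<le> card (A\<union>B) + card C" by (rule card_Un_le)
  moreover have "card (A\<union>B) \<le> card A + card B" by (rule card_Un_le)
  ultimately show ?thesis by linarith
qed

definition Bset :: "(nat \<times> nat \<Rightarrow> nat) \<Rightarrow> nat \<Rightarrow> nat set" where
  "Bset f t = {x. 1 \<le> x \<and> x + t \<le> 2593 \<and> f (x,x) = f (x+t,x+t)}"

lemma Bset_card1:
  assumes nL: "\<not> has_mono_L 2593 f" and col: "coloring 3 2593 f" and t: "1 \<le> t"
  shows "card (Bset f t) \<le> 432"
proof -
  let ?A = "Aset 2593 f t"
  have sub: "Bset f t \<subseteq> ?A 1 2 \<union> ?A 1 3 \<union> ?A 2 1 \<union> ?A 2 3 \<union> ?A 3 1 \<union> ?A 3 2"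
  proof
    fix x assume x: "x \<in> Bset f t"
    hence x1: "1 \<le> x" "x + t \<le> 2593" "f (x,x) = f (x+t,x+t)" unfolding Bset_def by auto
    have h: "f (x,x) \<noteq> f (x,x+t) \<or> f (x,x+t) \<noteq> f (x+t,x+t)"
      by (rule noL[OF nL]) (use x1 t in auto)
    have r: "f (x,x) \<in> {1..3}" "f (x,x+t) \<in> {1..3}"
      by (rule colr[OF col]; use x1 t in auto)+
    show "x \<in> ?A 1 2 \<union> ?A 1 3 \<union> ?A 2 1 \<union> ?A 2 3 \<union> ?A 3 1 \<union> ?A 3 2"
      using x1 h r unfolding Aset_def by auto
  qed
  have fin: "finite (?A c d)" for c d unfolding Aset_def
    by (rule finite_subset[of _ "{..2593}"]) auto
  have "card (Bset f t) \<le> card (?A 1 2 \<union> ?A 1 3 \<union> ?A 2 1 \<union> ?A 2 3 \<union> ?A 3 1 \<union> ?A 3 2)"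
    by (rule card_mono) (use fin sub in auto)
  also have "\<dots> \<le> card (?A 1 2) + card (?A 1 3) + card (?A 2 1) + card (?A 2 3) + card (?A 3 1) + card (?A 3 2)"
    by (rule card_Un6)
  also have "\<dots> \<le> 432" using Aset_card[OF nL col t, of 1 2] Aset_card[OF nL col t, of 1 3]
    Aset_card[OF nL col t, of 2 1] Aset_card[OF nL col t, of 2 3] Aset_card[OF nL col t, of 3 1]
    Aset_card[OF nL col t, of 3 2] by linarith
  finally show ?thesis .
qed

lemma Bset_card2: "card (Bset f t) \<le> 2593 - t"
proof -
  have "Bset f t \<subseteq> {1..2593 - t}" unfolding Bset_def by auto
  then show ?thesis by (metis card_atLeastAtMost card_mono diff_Suc_1 finite_atLeastAtMost)
qed

lemma ar0: "(6723649::nat) \<le> 3*q \<Longrightarrow> q = 2*m + 2593 \<Longrightarrow> 2238600 \<le> 2*m"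
  by linarith
lemma arL: "(6723649::nat) \<le> 3*(q1+q2+q3) \<Longrightarrow> 2*l1 + s1 = q1 \<Longrightarrow> 2*l2 + s2 = q2
       \<Longrightarrow> 2*l3 + s3 = q3 \<Longrightarrow> s1+s2+s3 = 2593 \<Longrightarrow> m = l1+l2+l3 \<Longrightarrow> 2238600 \<le> 2*m"
proof -
  assume a: "(6723649::nat) \<le> 3*(q1+q2+q3)" "2*l1 + s1 = q1" "2*l2 + s2 = q2" "2*l3 + s3 = q3" "s1+s2+s3 = 2593" "m = l1+l2+l3"
  have "q1+q2+q3 = 2*m + 2593" using a(2-6) by simp
  then show ?thesis using ar0 a(1) by blast
qed

lemma finB: "finite (Bset f t)"
  unfolding Bset_def by (rule finite_subset[of _ "{..2593}"]) auto

theorem theorem2p3: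
  fixes f :: "nat \<times> nat \<Rightarrow> nat"
  assumes "coloring 3 2593 f"
  shows "has_mono_L 2593 f"
proof (rule ccontr)
  assume nL: "\<not> has_mono_L 2593 f"
  note col = assms
  define S where "S c = {x \<in> {1..2593::nat}. f (x,x) = c}" for c
  define Lt where "Lt X = {(x,y). x \<in> X \<and> y \<in> X \<and> (x::nat) < y}" for X
  define M where "M = {(x,y). x \<in> {1..2593::nat} \<and> y \<in> {1..2593} \<and> x < y \<and> f (x,x) = f (y,y)}"
  have dcol: "f (x,x) \<in> {1..3}" if "x \<in> {1..2593}" for x
    by (rule colr[OF col]) (use that in auto)
  have finS: "finite (S c)" for c unfolding S_def by auto
  have finL: "finite (Lt (S c))" for c unfolding Lt_def
    by (rule finite_subset[of _ "S c \<times> S c"]) (auto simp: finS)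
  have MU: "M = Lt (S 1) \<union> Lt (S 2) \<union> Lt (S 3)"
  proof
    show "Lt (S 1) \<union> Lt (S 2) \<union> Lt (S 3) \<subseteq> M" unfolding M_def Lt_def S_def by auto
    show "M \<subseteq> Lt (S 1) \<union> Lt (S 2) \<union> Lt (S 3)"
    proof
      fix p assume "p \<in> M"
      then obtain x y where p: "p = (x,y)" "x \<in> {1..2593}" "y \<in> {1..2593}" "x < y" "f (x,x) = f (y,y)"
        unfolding M_def by auto
      have "f (x,x) = 1 \<or> f (x,x) = 2 \<or> f (x,x) = 3" using dcol[OF p(2)] by auto
      then show "p \<in> Lt (S 1) \<union> Lt (S 2) \<union> Lt (S 3)"
        using p unfolding Lt_def S_def by auto
    qed
  qed
  have cM: "card M = card (Lt (S 1)) + card (Lt (S 2)) + card (Lt (S 3))"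
  proof -
    have d1: "Lt (S 1) \<inter> Lt (S 2) = {}" "(Lt (S 1) \<union> Lt (S 2)) \<inter> Lt (S 3) = {}"
      unfolding Lt_def S_def by auto
    show ?thesis unfolding MU
      using card_Un_disjoint[OF _ _ d1(2)] card_Un_disjoint[OF _ _ d1(1)] finL by simp
  qed
  have DU: "{1..2593::nat} = S 1 \<union> S 2 \<union> S 3"
  proof
    show "S 1 \<union> S 2 \<union> S 3 \<subseteq> {1..2593}" unfolding S_def by auto
    show "{1..2593} \<subseteq> S 1 \<union> S 2 \<union> S 3"
    proof
      fix x assume x: "x \<in> {1..2593::nat}"
      have "f (x,x) = 1 \<or> f (x,x) = 2 \<or> f (x,x) = 3" using dcol[OF x] by auto
      then show "x \<in> S 1 \<union> S 2 \<union> S 3" using x unfolding S_def by auto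
    qed
  qed
  have cD: "card (S 1) + card (S 2) + card (S 3) = 2593"
  proof -
    have "card {1..2593::nat} = card (S 1) + card (S 2) + card (S 3)"
    proof -
      have d1: "S 1 \<inter> S 2 = {}" "(S 1 \<union> S 2) \<inter> S 3 = {}"
        unfolding S_def by auto
      show ?thesis unfolding DU
        using card_Un_disjoint[OF _ _ d1(2)] card_Un_disjoint[OF _ _ d1(1)] finS by simp
    qed
    then show ?thesis by simp
  qed
  have e: "2 * card (Lt (S c)) + card (S c) = card (S c) * card (S c)" for c
    unfolding Lt_def by (rule lt_pairs_card[OF finS])
  have q: "(card (S 1) + card (S 2) + card (S 3))^2 \<le> 3 * (card (S 1)^2 + card (S 2)^2 + card (S 3)^2)"
    by (rule sq3)
  have low: "2 * card M \<ge> 2238600"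
    
  proof -
    have q': "2593 * 2593 \<le> 3 * (card (S 1) * card (S 1) + card (S 2) * card (S 2) + card (S 3) * card (S 3))"
      using q unfolding cD power2_eq_square .

    show ?thesis by (rule arL[OF _ e[of 1] e[of 2] e[of 3] cD cM]) (use q' in simp)
  qed
  have Msub: "M \<subseteq> (\<Union>t\<in>{1..2592}. (\<lambda>x. (x, x+t)) ` Bset f t)"
  proof
    fix p assume "p \<in> M"
    then obtain x y where p: "p = (x,y)" "1 \<le> x" "y \<le> 2593" "x < y" "f (x,x) = f (y,y)"
      unfolding M_def by auto
    hence "x \<in> Bset f (y - x)" "y - x \<in> {1..2592}" "p = (x, x + (y - x))"
      unfolding Bset_def by auto
    then show "p \<in> (\<Union>t\<in>{1..2592}. (\<lambda>x. (x, x+t)) ` Bset f t)" by blast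
  qed
  have "card M \<le> card (\<Union>t\<in>{1..2592}. (\<lambda>x. (x, x+t)) ` Bset f t)"
    by (rule card_mono[OF _ Msub]) (simp add: finB)
  also have "\<dots> \<le> (\<Sum>t\<in>{1..2592}. card ((\<lambda>x. (x, x+t)) ` Bset f t))"
    by (rule card_UN_le) simp
  also have "\<dots> \<le> (\<Sum>t\<in>{1..2592}. card (Bset f t))"
    by (rule sum_mono) (rule card_image_le[OF finB])
  also have "\<dots> = (\<Sum>t\<in>{1..2376}. card (Bset f t)) + (\<Sum>t\<in>{2377..2592}. card (Bset f t))"
  proof -
    have "{1..2592::nat} = {1..2376} \<union> {2377..2592}" by auto
    then show ?thesis by (simp only:) (rule sum.union_disjoint, auto)
  qed
  also have "\<dots> \<le> 2376 * 432 + 216 * 216"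
  proof (rule add_mono)
    have "(\<Sum>t\<in>{1..2376}. card (Bset f t)) \<le> card {1..2376::nat} * 432"
      using sum_bounded_above[of "{1..2376::nat}" "\<lambda>t. card (Bset f t)" 432] Bset_card1[OF nL col] by simp
    then show "(\<Sum>t\<in>{1..2376}. card (Bset f t)) \<le> 2376 * 432" by simp
    have "(\<Sum>t\<in>{2377..2592}. card (Bset f t)) \<le> card {2377..2592::nat} * 216"
    proof -
      have "card (Bset f t) \<le> 216" if "t \<in> {2377..2592::nat}" for t
      proof -
        have "2593 - t \<le> 216" using that by auto
        then show ?thesis using Bset_card2[of f t] by (rule_tac order_trans) auto
      qed
      then show ?thesis using sum_bounded_above[of "{2377..2592::nat}" "\<lambda>t. card (Bset f t)" 216] by simp
    qed
    then show "(\<Sum>t\<in>{2377..2592}. card (Bset f t)) \<le> 216 * 216" by simp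
  qed
  finally have "card M \<le> 2376 * 432 + 216 * 216" .
  with low show False by simp
qed

end
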